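(* Let $M, K, P, N$ be positive integers with $1 < M \le K \le P$. Then there exists a matrix $\mathbf{A} \in \mathbb{R}^{M \times N}$ such that every matrix $\mathbf{F} \in \mathbb{R}^{P \times N}$ with the property that, for every set $\chi \subseteq \{1,\ldots,P\}$ with $|\chi| = K$, the rows of $\mathbf{F}$ indexed by $\chi$ span all the rows of $\mathbf{A}$, satisfies the following: the number $\lambda$ of columns of $\mathbf{F}$ having more than $K-M$ zero entries satisfies $$\lambda < M\binom{P}{K-M+1}.$$ *)

theory Defs
  imports Complex_Main
begin

text \<open>Matrices are represented as functions nat => nat => real, with entries
 (i,j) for i < rows, j < cols (0-based indices). Rows are vectors in R^N.\<close>

definition row_in_span ::
  "nat \<Rightarrow> (nat \<Rightarrow> nat \<Rightarrow> real) \<Rightarrow> nat set \<Rightarrow> (nat \<Rightarrow> nat \<Rightarrow> real) \<Rightarrow> nat \<Rightarrow> bool" where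
  "row_in_span N F chi A a \<longleftrightarrow>
     (\<exists>c :: nat \<Rightarrow> real. \<forall>j<N. A a j = (\<Sum>i\<in>chi. c i * F i j))"

definition zeros_in_col :: "nat \<Rightarrow> (nat \<Rightarrow> nat \<Rightarrow> real) \<Rightarrow> nat \<Rightarrow> nat" where
  "zeros_in_col P F j = card {i. i < P \<and> F i j = 0}"

end

theory Submission imports Defs "HOL-Computational_Algebra.Polynomial" "HOL-Library.Function_Algebras" begin

lemma vandermonde_zero:
  fixes u :: "nat \<Rightarrow> real" and J :: "nat set"
  assumes "finite J" "card J = M" "0 < M"
    and h: "\<forall>j\<in>J. (\<Sum>a<M. u a * real j ^ a) = 0"
  shows "\<forall>a<M. u a = 0"
proof -
  define p where "p = (\<Sum>a<M. monom (u a) a)"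
  have pv: "poly p x = (\<Sum>a<M. u a * x ^ a)" for x
    by (simp add: p_def poly_sum poly_monom)
  have "p = 0"
  proof (rule ccontr)
    assume "p \<noteq> 0"
    hence c: "card {x. poly p x = 0} \<le> degree p" by (rule card_poly_roots_bound)
    have "degree p \<le> M - 1" unfolding p_def
      by (rule degree_sum_le) (auto simp: degree_monom_le intro: order.trans[OF degree_monom_le])
    moreover have "real ` J \<subseteq> {x. poly p x = 0}" using h pv by auto
    moreover have "finite {x. poly p x = 0}" using \<open>p \<noteq> 0\<close> poly_roots_finite by blast
    ultimately have "card (real ` J) \<le> M - 1" using c card_mono by (meson order.trans)
    moreover have "card (real ` J) = M" using assms by (simp add: card_image)
    ultimately show False using \<open>0 < M\<close> by simp
  qed
  show ?thesis
  proof (intro allI impI)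
    fix a assume "a < M"
    have "coeff p a = u a" unfolding p_def using \<open>a < M\<close>
      by (simp add: coeff_sum coeff_monom)
    thus "u a = 0" using \<open>p = 0\<close> by simp
  qed
qed

interpretation fv: vector_space "(\<lambda>(c::real) (f::nat\<Rightarrow>real) x. c * f x)"
  by unfold_locales (auto simp: fun_eq_iff algebra_simps)

lemma sum_fun_app: "(\<Sum>i\<in>S. f i) (x::nat) = (\<Sum>i\<in>S. (f i x :: real))"
  by (induction S rule: infinite_finite_induct) auto

lemma core:
  fixes G c :: "nat \<Rightarrow> nat \<Rightarrow> real"
  assumes "finite J" "card J = M" "0 < M" "finite S" "card S < M"
    and h: "\<forall>a<M. \<forall>j\<in>J. real j ^ a = (\<Sum>i\<in>S. c a i * G i j)"
  shows False
proof -
  define v where "v a = (\<lambda>j. if j\<in>J then real j ^ a else 0)" for a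
  define w where "w i = (\<lambda>j. if j\<in>J then G i j else 0)" for i
  have vin: "v a \<in> fv.span (w ` S)" if "a < M" for a
  proof -
    have "v a = (\<Sum>i\<in>S. (\<lambda>x. c a i * w i x))"
      using h that by (auto simp: fun_eq_iff sum_fun_app v_def w_def)
    also have "\<dots> \<in> fv.span (w ` S)"
      by (intro fv.span_sum fv.span_scale fv.span_base) auto
    finally show ?thesis .
  qed
  have zero: "\<forall>a<M. u a = 0" if "(\<Sum>a<M. (\<lambda>x. u a * v a x)) = 0" for u
  proof -
    have "\<forall>j\<in>J. (\<Sum>a<M. u a * real j ^ a) = 0"
    proof
      fix j assume "j \<in> J"
      have "(\<Sum>a<M. (\<lambda>x. u a * v a x)) j = 0" using that by simp
      thus "(\<Sum>a<M. u a * real j ^ a) = 0" using \<open>j \<in> J\<close> by (simp add: sum_fun_app v_def)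
    qed
    thus ?thesis using vandermonde_zero assms by blast
  qed
  have inj: "inj_on v {..<M}"
  proof (rule inj_onI, rule ccontr)
    fix a b assume ab: "a \<in> {..<M}" "b \<in> {..<M}" "v a = v b" "a \<noteq> b"
    define u where "u x = (if x = a then 1 else if x = b then -1 else (0::real))" for x
    have "(\<Sum>x<M. (\<lambda>y. u x * v x y)) = (\<Sum>x\<in>{a,b}. (\<lambda>y. u x * v x y))"
      by (rule sum.mono_neutral_right) (use ab in \<open>auto simp: u_def\<close>)
    also have "\<dots> = 0" using ab by (simp add: u_def fun_eq_iff)
    finally have "u a = 0" using zero ab by blast
    thus False by (simp add: u_def)
  qed
  have ind: "fv.independent (v ` {..<M})"
  proof (rule fv.independent_if_scalars_zero)
    fix f x assume s: "(\<Sum>x\<in>v ` {..<M}. (\<lambda>y. f x * x y)) = 0" and x: "x \<in> v ` {..<M}"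
    have "(\<Sum>a<M. (\<lambda>y. (f \<circ> v) a * v a y)) = 0"
      using s by (simp add: sum.reindex[OF inj])
    then have "\<forall>a<M. (f \<circ> v) a = 0" by (rule zero)
    with x show "f x = 0" by auto
  qed simp
  have "card (v ` {..<M}) \<le> card (w ` S)"
    using fv.independent_span_bound[OF _ ind] vin \<open>finite S\<close> by blast
  also have "\<dots> \<le> card S" by (rule card_image_le) fact
  finally show False using card_image[OF inj] \<open>card S < M\<close> by simp
qed


theorem lemma3:
  fixes M K P N :: nat
  assumes "0 < M" "0 < K" "0 < P" "0 < N"
    and "1 < M" "M \<le> K" "K \<le> P"
  shows "\<exists>A :: nat \<Rightarrow> nat \<Rightarrow> real.
           \<forall>F :: nat \<Rightarrow> nat \<Rightarrow> real.
             (\<forall>chi. chi \<subseteq> {..<P} \<and> card chi = K \<longrightarrow>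
                (\<forall>a<M. row_in_span N F chi A a))
             \<longrightarrow> card {j. j < N \<and> zeros_in_col P F j > K - M} < M * (P choose (K - M + 1))"
proof -
  define A :: "nat \<Rightarrow> nat \<Rightarrow> real" where "A a j = real j ^ a" for a j
  define L where "L = K - M + 1"
  show ?thesis
  proof (intro exI[of _ A] allI impI)
    fix F :: "nat \<Rightarrow> nat \<Rightarrow> real"
    assume hyp: "\<forall>chi. chi \<subseteq> {..<P} \<and> card chi = K \<longrightarrow> (\<forall>a<M. row_in_span N F chi A a)"
    define Zs where "Zs = {Z. Z \<subseteq> {..<P} \<and> card Z = L}"
    define JZ where "JZ Z = {j. j < N \<and> (\<forall>i\<in>Z. F i j = 0)}" for Z
    have cZs: "card Zs = P choose L" unfolding Zs_def using n_subsets[of "{..<P}" L] by simp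
    have fZs: "finite Zs" unfolding Zs_def by auto
    have bound: "card (JZ Z) \<le> M - 1" if Z: "Z \<in> Zs" for Z
    proof (rule ccontr)
      assume "\<not> card (JZ Z) \<le> M - 1"
      hence "M \<le> card (JZ Z)" by simp
      then obtain J where J: "J \<subseteq> JZ Z" "card J = M" "finite J" by (rule obtain_subset_with_card_n)
      have Zsub: "Z \<subseteq> {..<P}" and cZ: "card Z = L" using Z by (auto simp: Zs_def)
      have fZ: "finite Z" using Zsub finite_subset by blast
      have "card ({..<P} - Z) = P - L" using Zsub fZ cZ by (simp add: card_Diff_subset)
      hence "M - 1 \<le> card ({..<P} - Z)" using assms by (simp add: L_def)
      then obtain S where S: "S \<subseteq> {..<P} - Z" "card S = M - 1" "finite S" by (rule obtain_subset_with_card_n)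
      have dis: "Z \<inter> S = {}" using S by auto
      have "card (Z \<union> S) = K" using card_Un_disjoint[OF fZ \<open>finite S\<close> dis] cZ S assms
        by (simp add: L_def)
      moreover have "Z \<union> S \<subseteq> {..<P}" using Zsub S by auto
      ultimately have "\<forall>a<M. row_in_span N F (Z \<union> S) A a" using hyp by blast
      hence "\<forall>a. \<exists>c. a < M \<longrightarrow> (\<forall>j<N. A a j = (\<Sum>i\<in>Z \<union> S. c i * F i j))"
        by (auto simp: row_in_span_def)
      then obtain c where c: "\<And>a j. a < M \<Longrightarrow> j < N \<Longrightarrow> A a j = (\<Sum>i\<in>Z \<union> S. c a i * F i j)"
        by metis
      have "\<forall>a<M. \<forall>j\<in>J. real j ^ a = (\<Sum>i\<in>S. c a i * F i j)"
      proof (intro allI impI ballI)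
        fix a j assume a: "a < M" and j: "j \<in> J"
        hence jN: "j < N" and z: "\<forall>i\<in>Z. F i j = 0" using J by (auto simp: JZ_def)
        have "real j ^ a = (\<Sum>i\<in>Z \<union> S. c a i * F i j)" using c[OF a jN] by (simp add: A_def)
        also have "\<dots> = (\<Sum>i\<in>Z. c a i * F i j) + (\<Sum>i\<in>S. c a i * F i j)"
          by (rule sum.union_disjoint) (use fZ S dis in auto)
        also have "(\<Sum>i\<in>Z. c a i * F i j) = 0" using z by simp
        finally show "real j ^ a = (\<Sum>i\<in>S. c a i * F i j)" by simp
      qed
      from core[OF \<open>finite J\<close> \<open>card J = M\<close> \<open>0 < M\<close> \<open>finite S\<close> _ this] S(2) assms
      show False by simp
    qed
    have sub: "{j. j < N \<and> zeros_in_col P F j > K - M} \<subseteq> (\<Union>Z\<in>Zs. JZ Z)"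
    proof
      fix j assume "j \<in> {j. j < N \<and> zeros_in_col P F j > K - M}"
      hence jN: "j < N" and "L \<le> card {i. i < P \<and> F i j = 0}"
        by (auto simp: zeros_in_col_def L_def)
      then obtain Z where Z: "Z \<subseteq> {i. i < P \<and> F i j = 0}" "card Z = L"
        by (meson obtain_subset_with_card_n)
      hence "Z \<in> Zs" by (auto simp: Zs_def)
      moreover have "j \<in> JZ Z" using Z jN by (auto simp: JZ_def)
      ultimately show "j \<in> (\<Union>Z\<in>Zs. JZ Z)" by blast
    qed
    have "card {j. j < N \<and> zeros_in_col P F j > K - M} \<le> card (\<Union>Z\<in>Zs. JZ Z)"
      by (rule card_mono[OF _ sub]) (auto simp: JZ_def fZs)
    also have "\<dots> \<le> (\<Sum>Z\<in>Zs. card (JZ Z))" by (rule card_UN_le[OF fZs])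
    also have "\<dots> \<le> card Zs * (M - 1)" using sum_bounded_above[of Zs "\<lambda>Z. card (JZ Z)" "M - 1"] bound by simp
    also have "\<dots> < M * card Zs"
    proof -
      have "L \<le> P" using assms by (simp add: L_def)
      hence "card Zs > 0" using cZs zero_less_binomial by simp
      thus ?thesis using assms by simp
    qed
    finally show "card {j. j < N \<and> zeros_in_col P F j > K - M} < M * (P choose (K - M + 1))"
      using cZs by (simp add: L_def)
  qed
qed

end
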